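(* For every temporal oriented tree $\mathcal T$, the connectivity graph $G$ of $\mathcal T$ contains no odd hole, i.e., no induced cycle of odd length at least $5$.
   Context: A temporal digraph is a pair $(D,\lambda)$ with $D=(V,A)$ a finite digraph and $\lambda:A\to 2^{\{1,\dots,t_{\max}\}}$ giving the time-steps at which each arc is active. A temporal oriented tree $\mathcal T=(T,\lambda)$ is one whose underlying digraph $T$ is an orientation of a tree. A temporal path is a sequence $(v_1,v_2,t_1),\dots,(v_{k-1},v_k,t_{k-1})$ with pairwise distinct $v_i$, $\overrightarrow{v_iv_{i+1}}\in A$, $t_i\in\lambda(\overrightarrow{v_iv_{i+1}})$ and $t_1<\dots<t_{k-1}$. Two vertices $u\ne v$ are temporally connected if there is a temporal path from $u$ to $v$ or from $v$ to $u$. The connectivity graph of $\mathcal T$ is the undirected graph $G$ with $V(G)=V(T)$ and $uv\in E(G)$ iff $u\neq v$ and $u,v$ are temporally connected. *)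

theory Defs
  imports Main
begin

definition is_cycle :: "'v set \<Rightarrow> ('v \<Rightarrow> 'v \<Rightarrow> bool) \<Rightarrow> 'v list \<Rightarrow> bool" where
  "is_cycle V E cs \<longleftrightarrow> length cs \<ge> 3 \<and> distinct cs \<and> set cs \<subseteq> V \<and>
     (\<forall>i < length cs. E (cs ! i) (cs ! ((i + 1) mod length cs)))"

definition induced_cycle :: "'v set \<Rightarrow> ('v \<Rightarrow> 'v \<Rightarrow> bool) \<Rightarrow> 'v list \<Rightarrow> bool" where
  "induced_cycle V E cs \<longleftrightarrow> is_cycle V E cs \<and>
     (\<forall>i j. i < length cs \<and> j < length cs \<and> E (cs ! i) (cs ! j) \<longrightarrow>
        j = (i + 1) mod length cs \<or> i = (j + 1) mod length cs)"

definition odd_hole :: "'v set \<Rightarrow> ('v \<Rightarrow> 'v \<Rightarrow> bool) \<Rightarrow> 'v list \<Rightarrow> bool" where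
  "odd_hole V E cs \<longleftrightarrow> induced_cycle V E cs \<and> odd (length cs) \<and> length cs \<ge> 5"

definition und :: "('v \<times> 'v) set \<Rightarrow> 'v \<Rightarrow> 'v \<Rightarrow> bool" where
  "und A u v \<longleftrightarrow> (u, v) \<in> A \<or> (v, u) \<in> A"

definition is_tree :: "'v set \<Rightarrow> ('v \<Rightarrow> 'v \<Rightarrow> bool) \<Rightarrow> bool" where
  "is_tree V E \<longleftrightarrow> V \<noteq> {} \<and>
     (\<forall>u\<in>V. \<forall>v\<in>V. (\<lambda>x y. x \<in> V \<and> y \<in> V \<and> E x y)\<^sup>*\<^sup>* u v) \<and>
     \<not> (\<exists>cs. is_cycle V E cs)"

definition oriented_tree :: "'v set \<Rightarrow> ('v \<times> 'v) set \<Rightarrow> bool" where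
  "oriented_tree V A \<longleftrightarrow> A \<subseteq> V \<times> V \<and> (\<forall>u v. (u, v) \<in> A \<longrightarrow> u \<noteq> v \<and> (v, u) \<notin> A) \<and>
     is_tree V (und A)"

definition temporal_path :: "('v \<times> 'v) set \<Rightarrow> ('v \<times> 'v \<Rightarrow> nat set) \<Rightarrow> 'v list \<Rightarrow> nat list \<Rightarrow> bool" where
  "temporal_path A lam vs ts \<longleftrightarrow> length vs \<ge> 2 \<and> length ts = length vs - 1 \<and> distinct vs \<and>
     (\<forall>i < length ts. (vs ! i, vs ! Suc i) \<in> A \<and> ts ! i \<in> lam (vs ! i, vs ! Suc i)) \<and>
     sorted_wrt (<) ts"

definition temp_path_from_to :: "('v \<times> 'v) set \<Rightarrow> ('v \<times> 'v \<Rightarrow> nat set) \<Rightarrow> 'v \<Rightarrow> 'v \<Rightarrow> bool" where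
  "temp_path_from_to A lam u v \<longleftrightarrow>
     (\<exists>vs ts. temporal_path A lam vs ts \<and> hd vs = u \<and> last vs = v)"

definition temporally_connected :: "('v \<times> 'v) set \<Rightarrow> ('v \<times> 'v \<Rightarrow> nat set) \<Rightarrow> 'v \<Rightarrow> 'v \<Rightarrow> bool" where
  "temporally_connected A lam u v \<longleftrightarrow> temp_path_from_to A lam u v \<or> temp_path_from_to A lam v u"

definition conn_graph :: "'v set \<Rightarrow> ('v \<times> 'v) set \<Rightarrow> ('v \<times> 'v \<Rightarrow> nat set) \<Rightarrow> 'v \<Rightarrow> 'v \<Rightarrow> bool" where
  "conn_graph V A lam u v \<longleftrightarrow> u \<in> V \<and> v \<in> V \<and> u \<noteq> v \<and> temporally_connected A lam u v"

end

theory Submission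
  imports Defs
begin

definition Rq :: "'v set \<Rightarrow> ('v \<times> 'v) set \<Rightarrow> 'v \<Rightarrow> 'v \<Rightarrow> 'v \<Rightarrow> bool" where
  "Rq V A q a b \<longleftrightarrow> a \<in> V \<and> b \<in> V \<and> a \<noteq> q \<and> b \<noteq> q \<and> und A a b"

lemma Rq_sym: "Rq V A q a b \<Longrightarrow> Rq V A q b a"
  unfolding Rq_def und_def by auto

lemma rtranclp_sym:
  assumes "S\<^sup>*\<^sup>* a b" "\<And>x y. S x y \<Longrightarrow> S y x"
  shows "S\<^sup>*\<^sup>* b a"
  using assms(1)
proof (induction rule: rtranclp_induct)
  case base then show ?case by simp
next
  case (step y z)
  then show ?case using assms(2) by (meson converse_rtranclp_into_rtranclp)
qed

lemma chain_rtranclp: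
  assumes "a \<le> b" "\<And>l. a \<le> l \<Longrightarrow> l < b \<Longrightarrow> S (g l) (g (Suc l))"
  shows "S\<^sup>*\<^sup>* (g a) (g b)"
  using assms(1)
proof (induction b rule: dec_induct)
  case base then show ?case by simp
next
  case (step n)
  have "S (g n) (g (Suc n))" using assms(2) step by auto
  then show ?case using step by (meson rtranclp.rtrancl_into_rtrancl)
qed

lemma rtranclp_distinct_path:
  assumes "S\<^sup>*\<^sup>* x y"
  shows "\<exists>ps. ps \<noteq> [] \<and> hd ps = x \<and> last ps = y \<and> distinct ps \<and>
          (\<forall>i. Suc i < length ps \<longrightarrow> S (ps!i) (ps!Suc i))"
  using assms
proof (induction rule: converse_rtranclp_induct)
  case base
  show ?case by (rule exI[of _ "[y]"]) simp
next
  case (step x w)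
  then obtain ps where ps: "ps \<noteq> []" "hd ps = w" "last ps = y" "distinct ps"
    "\<forall>i. Suc i < length ps \<longrightarrow> S (ps!i) (ps!Suc i)" by blast
  show ?case
  proof (cases "x \<in> set ps")
    case True
    then obtain k where k: "k < length ps" "ps!k = x" by (meson in_set_conv_nth)
    show ?thesis
    proof (rule exI[of _ "drop k ps"], intro conjI allI impI)
      show "drop k ps \<noteq> []" using k by simp
      show "hd (drop k ps) = x" using k by (simp add: hd_drop_conv_nth)
      show "last (drop k ps) = y" using k ps(3) by simp
      show "distinct (drop k ps)" using ps(4) by simp
      fix i assume "Suc i < length (drop k ps)"
      then show "S (drop k ps ! i) (drop k ps ! Suc i)" using ps(5)[rule_format, of "k+i"] by simp
    qed
  next
    case False
    show ?thesis
    proof (rule exI[of _ "x # ps"], intro conjI allI impI)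
      fix i assume i: "Suc i < length (x # ps)"
      show "S ((x # ps) ! i) ((x # ps) ! Suc i)"
      proof (cases i)
        case 0 then show ?thesis using step.hyps(1) ps(1,2) by (simp add: hd_conv_nth)
      next
        case (Suc j) then show ?thesis using i ps(5) by simp
      qed
    qed (use False ps in auto)
  qed
qed

lemma no_cycle_through:
  assumes tree: "is_tree V (und A)" and z: "z \<in> V"
    and zx: "und A z x" and zy: "und A z y" and xy: "x \<noteq> y"
    and path: "(Rq V A z)\<^sup>*\<^sup>* x y"
  shows False
proof -
  obtain ps where ps: "ps \<noteq> []" "hd ps = x" "last ps = y" "distinct ps"
    "\<forall>i. Suc i < length ps \<longrightarrow> Rq V A z (ps!i) (ps!Suc i)"
    using rtranclp_distinct_path[OF path] by blast
  have len: "length ps \<ge> 2"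
  proof (rule ccontr)
    assume "\<not> ?thesis"
    then have "length ps = 1" using ps(1) by (cases ps) (auto simp: not_le)
    then show False using ps xy by (cases ps) auto
  qed
  have elem: "ps!i \<in> V \<and> ps!i \<noteq> z" if "i < length ps" for i
  proof (cases "Suc i < length ps")
    case True then show ?thesis using ps(5) unfolding Rq_def by blast
  next
    case False
    then have "i = Suc (i - 1)" "Suc (i-1) < length ps" using that len by auto
    then show ?thesis using ps(5)[rule_format, of "i-1"] unfolding Rq_def by metis
  qed
  define cs where "cs = z # ps"
  have "is_cycle V (und A) cs"
    unfolding is_cycle_def
  proof (intro conjI allI impI)
    show "3 \<le> length cs" using len cs_def by simp
    show "distinct cs" using elem ps(4) cs_def by (auto simp: in_set_conv_nth)
    show "set cs \<subseteq> V" using elem z cs_def by (auto simp: in_set_conv_nth)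
    fix i assume i: "i < length cs"
    consider "i = 0" | "i = length ps" | "0 < i \<and> i < length ps" using i cs_def by fastforce
    then show "und A (cs ! i) (cs ! ((i + 1) mod length cs))"
    proof cases
      case 1 then show ?thesis using zx ps(1,2) len cs_def by (simp add: hd_conv_nth)
    next
      case 2 then show ?thesis using zy ps(1,3) cs_def by (auto simp: last_conv_nth und_def)
    next
      case 3
      then obtain j where j: "i = Suc j" "Suc j < length ps" by (cases i) auto
      then show ?thesis using ps(5) cs_def unfolding Rq_def by simp
    qed
  qed
  then show False using tree unfolding is_tree_def by blast
qed

lemma subpath:
  assumes tp: "temporal_path A lam vs ts" and j: "0 < j" "j < length vs - 1"
  shows "temp_path_from_to A lam (hd vs) (vs!j) \<and> temp_path_from_to A lam (vs!j) (last vs)"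
proof
  have lens: "length vs \<ge> 2" "length ts = length vs - 1" "distinct vs"
    "\<forall>i < length ts. (vs ! i, vs ! Suc i) \<in> A \<and> ts ! i \<in> lam (vs ! i, vs ! Suc i)"
    "sorted_wrt (<) ts" using tp unfolding temporal_path_def by auto
  have "temporal_path A lam (take (Suc j) vs) (take j ts)"
    unfolding temporal_path_def using lens j by auto
  moreover have "hd (take (Suc j) vs) = hd vs" using j lens
    by (auto simp: hd_conv_nth)
  moreover have "last (take (Suc j) vs) = vs!j" using j lens
    by (subst last_conv_nth) auto
  ultimately show "temp_path_from_to A lam (hd vs) (vs!j)" unfolding temp_path_from_to_def by metis
  have "temporal_path A lam (drop j vs) (drop j ts)"
    unfolding temporal_path_def using lens j by auto
  moreover have "hd (drop j vs) = vs!j" "last (drop j vs) = last vs" using j lens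
    by (auto simp: hd_drop_conv_nth)
  ultimately show "temp_path_from_to A lam (vs!j) (last vs)" unfolding temp_path_from_to_def by metis
qed

lemma path_range:
  assumes tp: "temporal_path A lam vs ts" and AV: "A \<subseteq> V \<times> V"
    and ab: "a \<le> b" "b < length vs" and nq: "\<And>l. a \<le> l \<Longrightarrow> l \<le> b \<Longrightarrow> vs!l \<noteq> q"
  shows "(Rq V A q)\<^sup>*\<^sup>* (vs!a) (vs!b)"
proof (rule chain_rtranclp[where g = "nth vs"])
  show "a \<le> b" by fact
  fix l assume l: "a \<le> l" "l < b"
  have "(vs!l, vs!Suc l) \<in> A" using tp l ab unfolding temporal_path_def by auto
  then show "Rq V A q (vs!l) (vs!Suc l)" using AV nq l unfolding Rq_def und_def by auto
qed

lemma tp_avoid: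
  assumes AV: "A \<subseteq> V \<times> V" and ab: "temp_path_from_to A lam a b"
    and qa: "q \<noteq> a" and qb: "q \<noteq> b"
    and nb: "\<not> (temp_path_from_to A lam a q \<and> temp_path_from_to A lam q b)"
  shows "(Rq V A q)\<^sup>*\<^sup>* a b"
proof -
  obtain vs ts where t: "temporal_path A lam vs ts" "hd vs = a" "last vs = b"
    using ab unfolding temp_path_from_to_def by blast
  have len: "length vs \<ge> 2" using t(1) unfolding temporal_path_def by auto
  have "vs!l \<noteq> q" if "l < length vs" for l
  proof
    assume eq: "vs!l = q"
    have ne: "vs \<noteq> []" using len by auto
    have "l \<noteq> 0"
    proof
      assume "l = 0" then show False using eq t(2) qa hd_conv_nth[OF ne] by simp
    qed
    moreover have "l \<noteq> length vs - 1"
    proof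
      assume "l = length vs - 1" then show False using eq t(3) qb last_conv_nth[OF ne] by simp
    qed
    ultimately have "0 < l" "l < length vs - 1" using that by auto
    from subpath[OF t(1) this] show False using t eq nb by auto
  qed
  then have "(Rq V A q)\<^sup>*\<^sup>* (vs!0) (vs!(length vs - 1))"
    using path_range[OF t(1) AV, of 0 "length vs - 1" q] len by auto
  moreover have ne: "vs \<noteq> []" using len by auto
  ultimately show ?thesis using t hd_conv_nth[OF ne] last_conv_nth[OF ne] by simp
qed

lemma conn_avoid:
  assumes AV: "A \<subseteq> V \<times> V" and c: "conn_graph V A lam u v"
    and qu: "q \<noteq> u" and qv: "q \<noteq> v" and qV: "q \<in> V"
    and nb: "\<not> (conn_graph V A lam q u \<and> conn_graph V A lam q v)"
  shows "(Rq V A q)\<^sup>*\<^sup>* u v"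
proof -
  have uv: "u \<in> V" "v \<in> V" and tc: "temporally_connected A lam u v"
    using c unfolding conn_graph_def by auto
  from tc show ?thesis unfolding temporally_connected_def
  proof
    assume "temp_path_from_to A lam u v"
    then show ?thesis
      by (rule tp_avoid[OF AV _ qu qv])
         (use nb uv qV qu qv in \<open>auto simp: conn_graph_def temporally_connected_def\<close>)
  next
    assume "temp_path_from_to A lam v u"
    then have "(Rq V A q)\<^sup>*\<^sup>* v u"
      by (rule tp_avoid[OF AV _ qv qu])
         (use nb uv qV qu qv in \<open>auto simp: conn_graph_def temporally_connected_def\<close>)
    then show ?thesis using rtranclp_sym Rq_sym by metis
  qed
qed


lemma parity_alt: assumes alt: "\<And>i. d (Suc i) = (\<not> d i)"
  shows "d i = (if even i then d 0 else \<not> d 0)"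
proof (induction i)
  case 0 show ?case by simp
next
  case (Suc i) then show ?case by (simp add: alt)
qed

lemma key:
  assumes ot: "oriented_tree V A" and pq: "temp_path_from_to A lam p q"
    and qr: "temp_path_from_to A lam q r" and pr: "(Rq V A q)\<^sup>*\<^sup>* p r"
  shows False
proof -
  from ot have AV: "A \<subseteq> V \<times> V" and anti: "\<forall>u v. (u, v) \<in> A \<longrightarrow> u \<noteq> v \<and> (v, u) \<notin> A"
    and tree: "is_tree V (und A)" unfolding oriented_tree_def by auto
  obtain vs1 ts1 where t1: "temporal_path A lam vs1 ts1" "hd vs1 = p" "last vs1 = q"
    using pq unfolding temp_path_from_to_def by blast
  obtain vs2 ts2 where t2: "temporal_path A lam vs2 ts2" "hd vs2 = q" "last vs2 = r"
    using qr unfolding temp_path_from_to_def by blast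
  define n1 where "n1 = length vs1"
  define n2 where "n2 = length vs2"
  have n1: "n1 \<ge> 2" "length ts1 = n1 - 1" "distinct vs1"
     "\<forall>i < n1 - 1. (vs1 ! i, vs1 ! Suc i) \<in> A"
    using t1(1) unfolding temporal_path_def n1_def by auto
  have n2: "n2 \<ge> 2" "length ts2 = n2 - 1" "distinct vs2"
     "\<forall>i < n2 - 1. (vs2 ! i, vs2 ! Suc i) \<in> A"
    using t2(1) unfolding temporal_path_def n2_def by auto
  have ne1: "vs1 \<noteq> []" and ne2: "vs2 \<noteq> []" using n1 n2 n1_def n2_def by auto
  define x where "x = vs1 ! (n1 - 2)"
  define y where "y = vs2 ! 1"
  have q1: "vs1 ! (n1 - 1) = q" using t1(3) last_conv_nth[OF ne1] n1_def by simp
  have q2: "vs2 ! 0 = q" using t2(2) hd_conv_nth[OF ne2] by simp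
  have "Suc (n1 - 2) = n1 - 1" using n1(1) by simp
  then have xq: "(x, q) \<in> A" using n1(4)[rule_format, of "n1 - 2"] n1(1) q1 x_def by simp
  have qy: "(q, y) \<in> A" using n2(4)[rule_format, of 0] n2(1) q2 y_def by simp
  have xy: "x \<noteq> y" using xq qy anti by blast
  have qV: "q \<in> V" using xq AV by auto
  have "(Rq V A q)\<^sup>*\<^sup>* (vs1!0) (vs1!(n1-2))"
  proof (rule path_range[OF t1(1) AV])
    fix l assume "0 \<le> l" "l \<le> n1 - 2"
    then have "l < n1" "l \<noteq> n1 - 1" "n1 - 1 < n1" using n1(1) by auto
    then show "vs1 ! l \<noteq> q" using q1 nth_eq_iff_index_eq[OF n1(3)] n1_def by metis
  qed (use n1 n1_def in auto)
  then have xp: "(Rq V A q)\<^sup>*\<^sup>* x p"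
    using rtranclp_sym Rq_sym t1(2) hd_conv_nth[OF ne1] x_def by metis
  have "(Rq V A q)\<^sup>*\<^sup>* (vs2!1) (vs2!(n2-1))"
  proof (rule path_range[OF t2(1) AV])
    fix l assume "1 \<le> l" "l \<le> n2 - 1"
    then have "l < n2" "l \<noteq> 0" "0 < n2" using n2(1) by auto
    then show "vs2 ! l \<noteq> q" using q2 nth_eq_iff_index_eq[OF n2(3)] n2_def by metis
  qed (use n2 n2_def in auto)
  then have ry: "(Rq V A q)\<^sup>*\<^sup>* r y"
    using rtranclp_sym Rq_sym t2(3) last_conv_nth[OF ne2] y_def n2_def by metis
  have "(Rq V A q)\<^sup>*\<^sup>* x y" using xp pr ry by (meson rtranclp_trans)
  then show False
    using no_cycle_through[OF tree qV _ _ xy] xq qy unfolding und_def by blast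
qed

theorem mainTheorem8:
  fixes V :: "'v set" and A :: "('v \<times> 'v) set" and lam :: "'v \<times> 'v \<Rightarrow> nat set" and tmax :: nat
  assumes "finite V"
    and "oriented_tree V A"
    and "\<forall>a\<in>A. lam a \<subseteq> {1..tmax}"
  shows "\<not> (\<exists>cs. odd_hole V (conn_graph V A lam) cs)"
proof
  assume "\<exists>cs. odd_hole V (conn_graph V A lam) cs"
  then obtain cs where oh: "odd_hole V (conn_graph V A lam) cs" by blast
  have ot: "oriented_tree V A" by fact
  then have AV: "A \<subseteq> V \<times> V" unfolding oriented_tree_def by auto
  define E where "E = conn_graph V A lam"
  define k where "k = length cs"
  have k5: "k \<ge> 5" and kodd: "odd k" using oh unfolding odd_hole_def k_def by auto
  have cyc: "\<forall>i < k. E (cs ! i) (cs ! ((i + 1) mod k))" and dist: "distinct cs"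
    and sV: "set cs \<subseteq> V"
    using oh unfolding odd_hole_def induced_cycle_def is_cycle_def k_def E_def by auto
  have ind: "\<forall>i j. i < k \<and> j < k \<and> E (cs ! i) (cs ! j) \<longrightarrow> j = (i + 1) mod k \<or> i = (j + 1) mod k"
    using oh unfolding odd_hole_def induced_cycle_def k_def E_def by auto
  define f where "f n = cs ! (n mod k)" for n
  have kpos: "k > 0" using k5 by simp
  have F1: "E (f n) (f (Suc n))" for n
    using cyc[rule_format, of "n mod k"] kpos unfolding f_def by (simp add: mod_Suc_eq)
  have F2: "f n = f m \<longleftrightarrow> n mod k = m mod k" for n m
    unfolding f_def using dist kpos by (simp add: nth_eq_iff_index_eq k_def)
  have F3: "E (f n) (f m) \<Longrightarrow> m mod k = Suc n mod k \<or> n mod k = Suc m mod k" for n m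
    using ind[rule_format, of "n mod k" "m mod k"] kpos unfolding f_def by (simp add: mod_Suc_eq)
  have F4: "f n \<in> V" for n unfolding f_def using sV kpos k_def by auto
  have MC: "a mod k = b mod k \<Longrightarrow> a \<le> b \<Longrightarrow> b < a + k \<Longrightarrow> a = b" for a b
  proof -
    assume h: "a mod k = b mod k" "a \<le> b" "b < a + k"
    then have "k dvd b - a" using mod_eq_dvd_iff_nat[of a b k] by auto
    moreover have "b - a < k" using h by auto
    ultimately have "b - a = 0" by (metis dvd_imp_le not_le zero_less_iff_neq_zero)
    then show "a = b" using h by auto
  qed
  have fk: "f (n + k) = f n" for n unfolding f_def by simp
  have chain: "(Rq V A (f (Suc i)))\<^sup>*\<^sup>* (f (Suc (Suc i))) (f i)" for i
  proof -
    have "((Rq V A (f (Suc i)))\<^sup>*\<^sup>*)\<^sup>*\<^sup>* (f (Suc (Suc i))) (f (i + k))"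
    proof (rule chain_rtranclp[where g = f])
      show "Suc (Suc i) \<le> i + k" using k5 by simp
      fix l assume l: "Suc (Suc i) \<le> l" "l < i + k"
      define m where "m = l - Suc (Suc i)"
      have m: "l = Suc (Suc i) + m" "m + 3 \<le> k" using l m_def by auto
      show "(Rq V A (f (Suc i)))\<^sup>*\<^sup>* (f l) (f (Suc l))"
      proof (rule conn_avoid[OF AV])
        show "conn_graph V A lam (f l) (f (Suc l))" using F1 E_def by simp
        show "f (Suc i) \<in> V" by (rule F4)
        show "f (Suc i) \<noteq> f l"
        proof
          assume "f (Suc i) = f l"
          then have "Suc i mod k = l mod k" using F2 by blast
          then have "Suc i = l" using MC[of "Suc i" l] m by simp
          then show False using m by simp
        qed
        show "f (Suc i) \<noteq> f (Suc l)"
        proof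
          assume "f (Suc i) = f (Suc l)"
          then have "Suc i mod k = Suc l mod k" using F2 by blast
          then have "Suc i = Suc l" using MC[of "Suc i" "Suc l"] m by simp
          then show False using m by simp
        qed
        show "\<not> (conn_graph V A lam (f (Suc i)) (f l) \<and> conn_graph V A lam (f (Suc i)) (f (Suc l)))"
        proof
          assume h: "conn_graph V A lam (f (Suc i)) (f l) \<and> conn_graph V A lam (f (Suc i)) (f (Suc l))"
          have "l mod k = Suc (Suc i) mod k \<or> Suc i mod k = Suc l mod k"
            using F3[of "Suc i" l] h E_def by blast
          then have l2: "l = Suc (Suc i)"
          proof
            assume "l mod k = Suc (Suc i) mod k"
            then show ?thesis using MC[of "Suc (Suc i)" l] m by simp
          next
            assume "Suc i mod k = Suc l mod k"
            then have "Suc i = Suc l" using MC[of "Suc i" "Suc l"] m by simp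
            then show ?thesis using m by simp
          qed
          have "Suc l mod k = Suc (Suc i) mod k \<or> Suc i mod k = Suc (Suc l) mod k"
            using F3[of "Suc i" "Suc l"] h E_def by blast
          then show False
          proof
            assume "Suc l mod k = Suc (Suc i) mod k"
            then have "Suc (Suc i) = Suc l" using MC[of "Suc (Suc i)" "Suc l"] m by simp
            then show False using l2 by simp
          next
            assume "Suc i mod k = Suc (Suc l) mod k"
            then have "Suc i = Suc (Suc l)" using MC[of "Suc i" "Suc (Suc l)"] l2 k5 by simp
            then show False using l2 by simp
          qed
        qed
      qed
    qed
    then show ?thesis using fk by simp
  qed
  define d where "d n = temp_path_from_to A lam (f n) (f (Suc n))" for n
  have dk: "d (n + k) = d n" for n unfolding d_def using fk[of n] fk[of "Suc n"] by simp
  have "\<exists>i. d i = d (Suc i)"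
  proof (rule ccontr)
    assume "\<not> ?thesis"
    then have alt: "d (Suc i) = (\<not> d i)" for i by blast
    have par: "d i = (if even i then d 0 else \<not> d 0)" for i
      by (rule parity_alt[of d, OF alt])
    have "d k = (\<not> d 0)" using kodd par[of k] by simp
    moreover have "d k = d 0" using dk[of 0] by simp
    ultimately show False by simp
  qed
  then obtain i where di: "d i = d (Suc i)" by blast
  have tc: "temporally_connected A lam (f n) (f (Suc n))" for n
    using F1 unfolding E_def conn_graph_def by auto
  show False
  proof (cases "d i")
    case True
    then have "temp_path_from_to A lam (f i) (f (Suc i))"
      "temp_path_from_to A lam (f (Suc i)) (f (Suc (Suc i)))"
      using di unfolding d_def by auto
    moreover have "(Rq V A (f (Suc i)))\<^sup>*\<^sup>* (f i) (f (Suc (Suc i)))"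
      using rtranclp_sym[OF chain[of i]] Rq_sym by metis
    ultimately show False using key[OF ot] by blast
  next
    case False
    then have "temp_path_from_to A lam (f (Suc i)) (f i)"
      "temp_path_from_to A lam (f (Suc (Suc i))) (f (Suc i))"
      using di tc[of i] tc[of "Suc i"] unfolding d_def temporally_connected_def by auto
    then show False using key[OF ot _ _ chain[of i]] by blast
  qed
qed

end
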